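(* Let $\{M_n\}_{n\ge0}$ be an $\mathbb R^d$-valued martingale with respect to a filtration $\{\mathcal F_n\}$ with $\mathbb E[\|M_0\|^p]<\infty$, where $p>2$, and suppose there is a constant $\nu$ with $\mathbb E[\|M_{n+1}-M_n\|^p\mid\mathcal F_n]\le\nu$ for all $n\ge0$. Let $\tau=\inf\{n>0:\|M_n\|<n\}$, and for $k>0$ let $S_k=\inf\{j\ge0:\|M_j\|\ge k/3\}$ and $T_k=\inf\{j\ge0:\|M_{j+1}-M_j\|\ge k/3\}$. Let $0<r<p$. Then there exists a constant $\theta''$ (independent of $n$) such that for all $n\ge1$, $$\mathbb E\big[\|M_n\|^r\mathbf 1_{\{\tau>n\}}\mathbf 1_{\{S_n>T_n\}}\big]\le\frac{\theta''}{n^{p-r}}.$$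
   Context: $\|\cdot\|$ denotes the Euclidean norm on $\mathbb R^d$. *)

theory Defs
  imports "HOL-Probability.Probability"
begin

definition filtration :: "'w measure \<Rightarrow> (nat \<Rightarrow> 'w measure) \<Rightarrow> bool" where
  "filtration M F \<longleftrightarrow> (\<forall>n. subalgebra M (F n)) \<and> (\<forall>n. sets (F n) \<subseteq> sets (F (Suc n)))"

definition martingale :: "'w measure \<Rightarrow> (nat \<Rightarrow> 'w measure) \<Rightarrow> (nat \<Rightarrow> 'w \<Rightarrow> 'a::euclidean_space) \<Rightarrow> bool" where
  "martingale M F X \<longleftrightarrow> filtration M F \<and>
     (\<forall>n. X n \<in> borel_measurable (F n)) \<and> (\<forall>n. integrable M (X n)) \<and>
     (\<forall>n. \<forall>b\<in>Basis. AE x in M. real_cond_exp M (F n) (\<lambda>y. X (Suc n) y \<bullet> b) x = X n x \<bullet> b)"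

definition first_time :: "(nat \<Rightarrow> bool) \<Rightarrow> enat" where
  "first_time P = (if \<exists>j. P j then enat (LEAST j. P j) else \<infinity>)"

end

theory Submission
  imports Defs
begin
lemma powr_sq_half: "x \<ge> 0 \<Longrightarrow> ((x::real)^2) powr (q/2) = x powr q"
proof (cases "x = 0")
  case False
  assume "x \<ge> 0" then have "x > 0" using False by simp
  then have "x^2 = x powr 2" by (simp add: powr_realpow)
  then show ?thesis by (simp add: powr_powr)
qed simp
lemma powr_split2: "x \<ge> 0 \<Longrightarrow> (x::real) powr q = x powr (q-2) * x^2"
proof (cases "x = 0")
  case False
  assume "x \<ge> 0" then have "x > 0" using False by simp
  then have "x powr (q-2) * x^2 = x powr (q-2) * x powr 2" by (simp add: powr_realpow)
  also have "\<dots> = x powr q" by (simp add: powr_add[symmetric])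
  finally show ?thesis by simp
qed simp
lemma powr_split1: "x \<ge> 0 \<Longrightarrow> (x::real) powr q = x powr (q-1) * x"
proof (cases "x = 0")
  case False
  assume "x \<ge> 0" then have "x > 0" using False by simp
  then have "x powr (q-1) * x = x powr (q-1) * x powr 1" using \<open>x > 0\<close> by simp
  also have "\<dots> = x powr q" by (subst powr_add[symmetric]) simp
  finally show ?thesis by simp
qed simp

lemma scalar_taylor:
  fixes \<alpha> t :: real
  assumes "\<alpha> > 1" "\<bar>t\<bar> \<le> 1/2"
  shows "(1+t) powr \<alpha> \<le> 1 + \<alpha>*t + (\<alpha>*(\<alpha>-1)/2 * ((1/2) powr (\<alpha>-2) + (3/2) powr (\<alpha>-2))) * t\<^sup>2"
proof (cases "t = 0")
  case True then show ?thesis by simp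
next
  case False
  define diff where "diff = (\<lambda>m::nat. if m = 0 then (\<lambda>t::real. (1+t) powr \<alpha>)
      else if m = 1 then (\<lambda>t. \<alpha> * (1+t) powr (\<alpha>-1)) else (\<lambda>t. \<alpha>*(\<alpha>-1) * (1+t) powr (\<alpha>-2)))"
  have D: "\<forall>m t. m < 2 \<and> -1/2 \<le> t \<and> t \<le> 1/2 \<longrightarrow> DERIV (diff m) t :> diff (Suc m) t"
  proof (intro allI impI)
    fix m :: nat and t :: real assume h: "m < 2 \<and> -1/2 \<le> t \<and> t \<le> 1/2"
    then have pos: "1 + t > 0" by simp
    have d1: "DERIV (\<lambda>t. (1+t) powr \<alpha>) t :> \<alpha> * (1+t) powr (\<alpha>-1)"
      using DERIV_powr[of "\<lambda>t. 1+t" t 1 "\<lambda>_. \<alpha>" 0] pos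
      by (auto intro!: derivative_eq_intros)
    have d2: "DERIV (\<lambda>t. \<alpha> * (1+t) powr (\<alpha>-1)) t :> \<alpha>*(\<alpha>-1) * (1+t) powr (\<alpha>-2)"
      using pos by (auto intro!: derivative_eq_intros simp: algebra_simps)
    show "DERIV (diff m) t :> diff (Suc m) t"
      using h d1 d2 by (cases m) (auto simp: diff_def)
  qed
  have T: "\<exists>\<xi>. (if t < 0 then t < \<xi> \<and> \<xi> < 0 else 0 < \<xi> \<and> \<xi> < t) \<and>
      diff 0 t = (\<Sum>m<2. (diff m 0 / fact m) * (t - 0)^m) + (diff 2 \<xi> / fact 2) * (t - 0)^2"
    by (rule Taylor[of 2 diff "diff 0" "-1/2" "1/2" 0 t]) (use D False assms(2) in auto)
  then obtain \<xi> where xi: "(if t < 0 then t < \<xi> \<and> \<xi> < 0 else 0 < \<xi> \<and> \<xi> < t)"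
    and eq: "diff 0 t = (\<Sum>m<2. (diff m 0 / fact m) * (t - 0)^m) + (diff 2 \<xi> / fact 2) * (t - 0)^2"
    by blast
  have xib: "1/2 \<le> 1 + \<xi>" "1 + \<xi> \<le> 3/2" using xi assms(2) by (auto split: if_splits)
  have "(1+\<xi>) powr (\<alpha>-2) \<le> (1/2) powr (\<alpha>-2) + (3/2) powr (\<alpha>-2)"
  proof (cases "\<alpha> - 2 \<ge> 0")
    case True
    then have "(1+\<xi>) powr (\<alpha>-2) \<le> (3/2) powr (\<alpha>-2)" using xib by (intro powr_mono2) auto
    then show ?thesis by (smt (verit) powr_ge_zero)
  next
    case False
    then have "(1+\<xi>) powr (\<alpha>-2) \<le> (1/2) powr (\<alpha>-2)" using xib by (intro powr_mono2') auto
    then show ?thesis by (smt (verit) powr_ge_zero)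
  qed
  then have "\<alpha>*(\<alpha>-1) * (1+\<xi>) powr (\<alpha>-2) / 2 * t^2 \<le> (\<alpha>*(\<alpha>-1)/2 * ((1/2) powr (\<alpha>-2) + (3/2) powr (\<alpha>-2))) * t\<^sup>2"
  proof -
    have "\<alpha>*(\<alpha>-1)/2 * (1+\<xi>) powr (\<alpha>-2) \<le> \<alpha>*(\<alpha>-1)/2 * ((1/2) powr (\<alpha>-2) + (3/2) powr (\<alpha>-2))"
      by (rule mult_left_mono) (use \<open>(1+\<xi>) powr (\<alpha>-2) \<le> _\<close> assms(1) in auto)
    then have "\<alpha>*(\<alpha>-1)/2 * (1+\<xi>) powr (\<alpha>-2) * t^2 \<le> \<alpha>*(\<alpha>-1)/2 * ((1/2) powr (\<alpha>-2) + (3/2) powr (\<alpha>-2)) * t^2"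
      by (rule mult_right_mono) auto
    then show ?thesis by (simp add: field_simps)
  qed
  moreover have "diff 0 t = 1 + \<alpha>*t + \<alpha>*(\<alpha>-1) * (1+\<xi>) powr (\<alpha>-2) / 2 * t^2"
    using eq by (simp add: diff_def numeral_2_eq_2 eval_nat_numeral)
  ultimately show ?thesis by (simp add: diff_def)
qed

lemma Lnonneg: "(p::real) > 2 \<Longrightarrow> (p/2)*((p/2)-1)/2 * ((1/2) powr ((p/2)-2) + (3/2) powr ((p/2)-2)) \<ge> 0"
proof -
  assume p: "p > 2"
  have "(p/2)*((p/2)-1)/2 \<ge> 0" using p by simp
  moreover have "(1/2::real) powr ((p/2)-2) + (3/2) powr ((p/2)-2) \<ge> 0" by (simp add: add_nonneg_nonneg)
  ultimately show ?thesis by (rule mult_nonneg_nonneg)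
qed

definition KT :: "real \<Rightarrow> real" where
  "KT p = 9 powr p + p * 8 powr (p-1) + p/2 + 9 * ((p/2)*((p/2)-1)/2 * ((1/2) powr ((p/2)-2) + (3/2) powr ((p/2)-2)))"

lemma KT_pos: "p > 2 \<Longrightarrow> KT p > 0"
proof -
  assume p: "p > 2"
  have "(p/2)*((p/2)-1)/2 * ((1/2) powr ((p/2)-2) + (3/2) powr ((p/2)-2)) \<ge> 0"
    using Lnonneg[OF p] .
  moreover have "9 powr p > 0" "p * 8 powr (p-1) \<ge> 0" using p by auto
  ultimately show ?thesis unfolding KT_def using p by linarith
qed

lemma real_taylor_bound:
  fixes a b c N p :: real
  assumes p: "p > 2" and ab: "a \<ge> 0" "b \<ge> 0" "\<bar>c\<bar> \<le> a*b" "N \<ge> 0" and NN: "N^2 = a^2 + 2*c + b^2"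
  shows "N powr p \<le> a powr p + p * a powr (p-2) * c + KT p * (a powr (p-2) * b^2 + b powr p)"
proof -
  define L where "L = (p/2)*((p/2)-1)/2 * ((1/2) powr ((p/2)-2) + (3/2) powr ((p/2)-2))"
  have L0: "L \<ge> 0" unfolding L_def using Lnonneg[OF p] .
  have K: "KT p = 9 powr p + p * 8 powr (p-1) + p/2 + 9*L" unfolding KT_def L_def by (rule refl)
  have Nab: "N \<le> a + b"
  proof -
    have "c \<le> a*b" using ab(3) by linarith
    moreover have "(a+b)^2 = a^2 + 2*(a*b) + b^2" by (simp add: power2_sum)
    ultimately have "N^2 \<le> (a+b)^2" using NN by linarith
    then show ?thesis using power2_le_imp_le[of N "a+b"] ab by auto
  qed
  have apos: "a powr (p-2) \<ge> 0" "b powr p \<ge> 0" "a powr p \<ge> 0" by auto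
  show ?thesis
  proof (cases "8*b \<ge> a")
    case True
    have "N powr p \<le> (9*b) powr p" by (rule powr_mono2) (use Nab True ab p in auto)
    also have "\<dots> = 9 powr p * b powr p" using ab by (simp add: powr_mult)
    finally have l: "N powr p \<le> 9 powr p * b powr p" .
    have "a powr (p-2) * \<bar>c\<bar> \<le> a powr (p-2) * (a * b)" by (rule mult_left_mono) (use ab in auto)
    also have "\<dots> = a powr (p-1) * b" using powr_split1[of a "p-1"] ab by (simp add: mult.assoc)
    also have "\<dots> \<le> (8*b) powr (p-1) * b" by (rule mult_right_mono[OF powr_mono2]) (use True ab p in auto)
    also have "\<dots> = 8 powr (p-1) * b powr p"
    proof -
      have "(8*b) powr (p-1) * b = 8 powr (p-1) * (b powr (p-1) * b)" using ab by (simp add: powr_mult)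
      also have "b powr (p-1) * b = b powr p" using powr_split1[of b p] ab by simp
      finally show ?thesis .
    qed
    finally have cc: "a powr (p-2) * \<bar>c\<bar> \<le> 8 powr (p-1) * b powr p" .
    have "a powr (p-2) * (- \<bar>c\<bar>) \<le> a powr (p-2) * c" by (rule mult_left_mono) (use apos in auto)
    then have "- (a powr (p-2) * \<bar>c\<bar>) \<le> a powr (p-2) * c" by simp
    then have "- (p * (a powr (p-2) * \<bar>c\<bar>)) \<le> p * a powr (p-2) * c"
      using mult_left_mono[of "- (a powr (p-2) * \<bar>c\<bar>)" "a powr (p-2) * c" p] p by (simp only: mult.assoc) simp
    moreover have "p * (a powr (p-2) * \<bar>c\<bar>) \<le> p * (8 powr (p-1) * b powr p)" using cc p by auto
    moreover have "KT p * (a powr (p-2) * b^2 + b powr p) \<ge> KT p * b powr p"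
      by (rule mult_left_mono) (use KT_pos[OF p] apos in auto)
    moreover have "KT p * b powr p = 9 powr p * b powr p + p * 8 powr (p-1) * b powr p + (p/2 + 9*L) * b powr p"
      using K by (simp add: distrib_right)
    moreover have "(p/2 + 9*L) * b powr p \<ge> 0" using p L0 by auto
    ultimately show ?thesis using l apos(3) by (simp only: mult.assoc)
  next
    case False
    then have a0: "a > 0" using ab by auto
    define t where "t = (2*c + b^2)/a^2"
    have bsmall: "b \<le> a/8" using False by simp
    have ct: "\<bar>2*c + b^2\<bar> \<le> 3*a*b"
    proof -
      have "\<bar>2*c + b^2\<bar> \<le> 2*a*b + b^2" using ab zero_le_power2[of b] by (simp only: abs_le_iff) linarith
      also have "b^2 \<le> a*b" using bsmall ab by (simp add: power2_eq_square mult_right_mono)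
      finally show ?thesis by simp
    qed
    have tb: "\<bar>t\<bar> \<le> 1/2"
    proof -
      have "\<bar>t\<bar> = \<bar>2*c + b^2\<bar> / a^2" unfolding t_def by (simp add: abs_divide)
      also have "\<dots> \<le> 3*a*b / a^2" by (rule divide_right_mono) (use ct a0 in auto)
      also have "\<dots> = 3*b/a" using a0 by (simp add: power2_eq_square)
      also have "\<dots> \<le> 1/2" using bsmall a0 by (simp add: field_simps)
      finally show ?thesis .
    qed
    have N2: "N^2 = a^2 * (1+t)" unfolding t_def using NN a0 by (simp add: field_simps)
    have "N powr p = (N^2) powr (p/2)" using powr_sq_half[of N p] ab by simp
    also have "\<dots> = (a^2) powr (p/2) * (1+t) powr (p/2)" unfolding N2 using tb by (simp add: powr_mult)
    also have "(a^2) powr (p/2) = a powr p" using powr_sq_half[of a p] a0 by simp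
    finally have Np: "N powr p = a powr p * (1+t) powr (p/2)" .
    have "(1+t) powr (p/2) \<le> 1 + (p/2)*t + L * t^2"
      unfolding L_def using scalar_taylor[of "p/2" t] p tb by simp
    then have "N powr p \<le> a powr p * (1 + (p/2)*t + L*t^2)" unfolding Np by (rule mult_left_mono) auto
    also have "\<dots> = a powr p + (p/2) * (a powr p * t) + L * (a powr p * t^2)" by (simp add: algebra_simps)
    also have "a powr p = a powr (p-2) * a^2" using powr_split2[of a p] a0 by simp
    finally have "N powr p \<le> a powr (p-2) * a^2 + (p/2) * (a powr (p-2) * a^2 * t) + L * (a powr (p-2) * a^2 * t^2)" .
    moreover have "a powr (p-2) * a^2 * t = a powr (p-2) * (2*c + b^2)" unfolding t_def using a0 by simp
    moreover have "a^2 * t^2 = (2*c+b^2)^2 / a^2" unfolding t_def using a0 by (simp add: power2_eq_square field_simps)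
    moreover have "(2*c+b^2)^2 / a^2 \<le> 9 * b^2"
    proof -
      have "(2*c+b^2)^2 \<le> (3*a*b)^2" using power_mono[OF ct, of 2] by simp
      then show ?thesis using a0 by (simp add: field_simps power2_eq_square)
    qed
    ultimately have "N powr p \<le> a powr p + p * a powr (p-2) * c + (p/2) * a powr (p-2) * b^2 + L * (a powr (p-2) * (9*b^2))"
    proof -
      assume A: "N powr p \<le> a powr (p-2) * a^2 + (p/2) * (a powr (p-2) * a^2 * t) + L * (a powr (p-2) * a^2 * t^2)"
        and B: "a powr (p-2) * a^2 * t = a powr (p-2) * (2*c + b^2)"
        and C: "a^2 * t^2 = (2*c+b^2)^2 / a^2" and D: "(2*c+b^2)^2 / a^2 \<le> 9 * b^2"
      have "L * (a powr (p-2) * a^2 * t^2) = L * (a powr (p-2) * ((2*c+b^2)^2 / a^2))" using C by (simp add: mult.assoc)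
      also have "\<dots> \<le> L * (a powr (p-2) * (9*b^2))" by (rule mult_left_mono[OF mult_left_mono[OF D]]) (use L0 apos in auto)
      finally have E: "L * (a powr (p-2) * a^2 * t^2) \<le> L * (a powr (p-2) * (9*b^2))" .
      have "(p/2) * (a powr (p-2) * a^2 * t) = p * a powr (p-2) * c + (p/2) * a powr (p-2) * b^2"
        unfolding B by (simp add: algebra_simps)
      then show ?thesis using A E \<open>a powr p = a powr (p-2) * a^2\<close> by linarith
    qed
    also have "\<dots> = a powr p + p * a powr (p-2) * c + (p/2 + 9*L) * (a powr (p-2) * b^2)" by (simp add: algebra_simps)
    also have "\<dots> \<le> a powr p + p * a powr (p-2) * c + KT p * (a powr (p-2) * b^2 + b powr p)"
    proof -
      have "(p/2 + 9*L) \<le> KT p" unfolding K using p by simp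
      then have "(p/2 + 9*L) * (a powr (p-2) * b^2) \<le> KT p * (a powr (p-2) * b^2)"
        by (rule mult_right_mono) (use apos in auto)
      moreover have "KT p * b powr p \<ge> 0" using KT_pos[OF p] by auto
      ultimately show ?thesis by (simp add: distrib_left)
    qed
    finally show ?thesis .
  qed
qed

lemma vec_taylor_bound:
  fixes x h :: "'a::real_inner"
  assumes p: "p > 2"
  shows "norm (x+h) powr p \<le> norm x powr p + p * norm x powr (p-2) * (x \<bullet> h)
           + KT p * (norm x powr (p-2) * (norm h)^2 + norm h powr p)"
proof (rule real_taylor_bound[OF p])
  show "\<bar>x \<bullet> h\<bar> \<le> norm x * norm h" by (rule Cauchy_Schwarz_ineq2)
  show "(norm (x+h))^2 = (norm x)^2 + 2 * (x \<bullet> h) + (norm h)^2"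
    by (simp add: power2_norm_eq_inner inner_add inner_commute)
qed auto


lemma mix_bound:
  fixes u v s p :: real
  assumes "u \<ge> 0" "v \<ge> 0" "0 \<le> s" "s \<le> p"
  shows "u powr s * v powr (p-s) \<le> u powr p + v powr p"
proof (cases "u \<le> v")
  case True
  have "u powr s * v powr (p-s) \<le> v powr s * v powr (p-s)"
    by (rule mult_right_mono) (use True assms in \<open>auto intro: powr_mono2\<close>)
  also have "\<dots> = v powr p" by (simp add: powr_add[symmetric])
  finally show ?thesis using powr_ge_zero[of u p] by linarith
next
  case False
  have "u powr s * v powr (p-s) \<le> u powr s * u powr (p-s)"
    by (rule mult_left_mono) (use False assms in \<open>auto intro: powr_mono2\<close>)
  also have "\<dots> = u powr p" by (simp add: powr_add[symmetric])
  finally show ?thesis using powr_ge_zero[of v p] by linarith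
qed

lemma sq_le_one_plus:
  fixes v p :: real
  assumes "v \<ge> 0" "p \<ge> 2"
  shows "v^2 \<le> 1 + v powr p"
proof (cases "v \<le> 1")
  case True
  then have "v^2 \<le> 1" using assms by (simp add: power_le_one)
  then show ?thesis using powr_ge_zero[of v p] by linarith
next
  case False
  then have "v^2 = v powr 2" by (simp add: powr_realpow)
  also have "\<dots> \<le> v powr p" using False assms by (intro powr_mono) auto
  finally show ?thesis by simp
qed

lemma young_split:
  fixes u s p :: real
  assumes "u \<ge> 0" "s > 0" "p \<ge> 2"
  shows "u powr (p-2) \<le> u powr p / s + s powr ((p-2)/2)"
proof (cases "u^2 \<ge> s")
  case True
  then have u0: "u > 0" using assms by (metis less_le_not_le power2_eq_square mult_zero_left zero_le_power2 antisym)
  have "u powr (p-2) = u powr p / u^2" using powr_split2[of u p] u0 by simp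
  also have "\<dots> \<le> u powr p / s" by (rule divide_left_mono) (use True assms u0 in auto)
  finally show ?thesis using powr_ge_zero[of s "(p-2)/2"] by linarith
next
  case False
  have "u powr (p-2) = (u^2) powr ((p-2)/2)" using powr_sq_half[of u "p-2"] assms by simp
  also have "\<dots> \<le> s powr ((p-2)/2)" using False assms by (intro powr_mono2) auto
  finally show ?thesis using divide_nonneg_pos[OF powr_ge_zero[of u p] assms(2)] by linarith
qed

lemma bern_powr:
  fixes x g :: real
  assumes "x \<ge> 1" "g \<ge> 1"
  shows "x powr g + g * x powr (g-1) \<le> (x+1) powr g"
proof -
  have "\<exists>z. x < z \<and> z < x+1 \<and> (x+1) powr g - x powr g = ((x+1) - x) * (g * z powr (g-1))"
    by (rule MVT2) (use assms in \<open>auto intro!: derivative_eq_intros\<close>)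
  then obtain z where z: "x < z" "z < x+1" "(x+1) powr g - x powr g = g * z powr (g-1)" by auto
  have "x powr (g-1) \<le> z powr (g-1)" using z assms by (intro powr_mono2) auto
  then have "g * x powr (g-1) \<le> g * z powr (g-1)" using assms by simp
  then show ?thesis using z by linarith
qed


locale mart_setup =
  fixes M :: "'w measure" and F :: "nat \<Rightarrow> 'w measure" and X :: "nat \<Rightarrow> 'w \<Rightarrow> 'a::euclidean_space"
    and p \<nu> :: real
  assumes prob: "prob_space M" and mart: "martingale M F X" and p2: "p > 2"
    and incr: "\<And>n. AE x in M. nn_cond_exp M (F n) (\<lambda>y. ennreal (norm (X (Suc n) y - X n y) powr p)) x \<le> ennreal \<nu>"
begin

sublocale prob_space M by (rule prob)

lemma filt: "filtration M F" using mart unfolding martingale_def by auto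

lemma subalg: "subalgebra M (F n)" using filt unfolding filtration_def by auto

lemma space_F: "space (F n) = space M" using subalg[of n] unfolding subalgebra_def by auto

lemma sets_mono: "k \<le> m \<Longrightarrow> sets (F k) \<subseteq> sets (F m)"
proof (induction m rule: dec_induct)
  case (step m) then show ?case using filt unfolding filtration_def by blast
qed simp

lemma subalg_FF: "k \<le> m \<Longrightarrow> subalgebra (F m) (F k)"
  unfolding subalgebra_def using sets_mono space_F by auto

lemma sfs: "sigma_finite_subalgebra M (F n)"
proof -
  have "finite_measure_subalgebra M (F n)"
    by unfold_locales (rule subalg)
  then show ?thesis by (rule finite_measure_subalgebra_is_sigma_finite)
qed

lemma adapted: "X n \<in> borel_measurable (F n)" using mart unfolding martingale_def by auto

lemma measF: "k \<le> m \<Longrightarrow> X k \<in> borel_measurable (F m)"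
  using measurable_from_subalg[OF subalg_FF adapted] by blast

lemma measM[measurable]: "X n \<in> borel_measurable M"
  using measurable_from_subalg[OF subalg adapted] by blast

lemma measFM: "f \<in> borel_measurable (F n) \<Longrightarrow> f \<in> borel_measurable M"
  using measurable_from_subalg[OF subalg] by blast

lemma intX: "integrable M (X n)" using mart unfolding martingale_def by auto

lemma sets_FM: "A \<in> sets (F n) \<Longrightarrow> A \<in> sets M" using subalg[of n] unfolding subalgebra_def by auto

definition nu where "nu = max \<nu> 0"
lemma nu_ge: "nu \<ge> 0" "\<nu> \<le> nu" unfolding nu_def by auto

lemma incr_nn:
  assumes g: "g \<in> borel_measurable (F n)"
  shows "(\<integral>\<^sup>+ x. g x * ennreal (norm (X (Suc n) x - X n x) powr p) \<partial>M) \<le> ennreal \<nu> * (\<integral>\<^sup>+ x. g x \<partial>M)"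
proof -
  interpret S: sigma_finite_subalgebra M "F n" by (rule sfs)
  have gM[measurable]: "g \<in> borel_measurable M" by (rule measFM[OF g])
  have "(\<integral>\<^sup>+ x. g x * ennreal (norm (X (Suc n) x - X n x) powr p) \<partial>M)
       = (\<integral>\<^sup>+ x. g x * nn_cond_exp M (F n) (\<lambda>y. ennreal (norm (X (Suc n) y - X n y) powr p)) x \<partial>M)"
    by (rule S.nn_cond_exp_intg[symmetric]) (use g in auto)
  also have "\<dots> \<le> (\<integral>\<^sup>+ x. g x * ennreal \<nu> \<partial>M)"
    by (rule nn_integral_mono_AE) (use incr[of n] in \<open>auto elim!: eventually_mono intro: mult_left_mono\<close>)
  also have "\<dots> = ennreal \<nu> * (\<integral>\<^sup>+ x. g x \<partial>M)"
    using nn_integral_cmult[OF gM, of "ennreal \<nu>"] by (simp add: mult.commute)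
  finally show ?thesis .
qed

lemma incr_real:
  assumes g: "g \<in> borel_measurable (F n)" and g0: "\<And>x. g x \<ge> 0" and gi: "integrable M g"
  shows "integrable M (\<lambda>x. g x * norm (X (Suc n) x - X n x) powr p)"
    and "(\<integral>x. g x * norm (X (Suc n) x - X n x) powr p \<partial>M) \<le> nu * (\<integral>x. g x \<partial>M)"
proof -
  have gM[measurable]: "g \<in> borel_measurable M" by (rule measFM[OF g])
  have gF: "(\<lambda>x. ennreal (g x)) \<in> borel_measurable (F n)" using g by measurable
  have ig0: "0 \<le> (\<integral>x. g x \<partial>M)" by (rule integral_nonneg_AE) (use g0 in auto)
  have "(\<integral>\<^sup>+ x. ennreal (g x * norm (X (Suc n) x - X n x) powr p) \<partial>M)
      = (\<integral>\<^sup>+ x. ennreal (g x) * ennreal (norm (X (Suc n) x - X n x) powr p) \<partial>M)"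
    using g0 by (simp add: ennreal_mult)
  also have "\<dots> \<le> ennreal \<nu> * (\<integral>\<^sup>+ x. ennreal (g x) \<partial>M)" by (rule incr_nn[OF gF])
  also have "(\<integral>\<^sup>+ x. ennreal (g x) \<partial>M) = ennreal (\<integral>x. g x \<partial>M)"
    by (rule nn_integral_eq_integral) (use gi g0 in auto)
  also have "ennreal \<nu> * ennreal (\<integral>x. g x \<partial>M) \<le> ennreal nu * ennreal (\<integral>x. g x \<partial>M)"
    using nu_ge by (intro mult_right_mono ennreal_leI) auto
  also have "\<dots> = ennreal (nu * (\<integral>x. g x \<partial>M))" using nu_ge ig0 by (simp add: ennreal_mult)
  finally have le: "(\<integral>\<^sup>+ x. ennreal (g x * norm (X (Suc n) x - X n x) powr p) \<partial>M) \<le> ennreal (nu * (\<integral>x. g x \<partial>M))" .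
  show int: "integrable M (\<lambda>x. g x * norm (X (Suc n) x - X n x) powr p)"
    by (rule integrableI_nonneg) (use le g0 in \<open>auto simp: top.not_eq_extremum intro: le_less_trans\<close>)
  have "ennreal (\<integral>x. g x * norm (X (Suc n) x - X n x) powr p \<partial>M) \<le> ennreal (nu * (\<integral>x. g x \<partial>M))"
    using le by (subst (asm) nn_integral_eq_integral[OF int]) (use g0 in auto)
  moreover have "nu * (\<integral>x. g x \<partial>M) \<ge> 0" using nu_ge g0 by auto
  ultimately show "(\<integral>x. g x * norm (X (Suc n) x - X n x) powr p \<partial>M) \<le> nu * (\<integral>x. g x \<partial>M)"
    by (simp add: ennreal_le_iff)
qed

lemma cross_zero:
  assumes Y[measurable]: "Y \<in> borel_measurable (F n)" and b: "b \<in> Basis"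
    and int: "integrable M (\<lambda>x. Y x * ((X (Suc n) x - X n x) \<bullet> b))"
  shows "(\<integral>x. Y x * ((X (Suc n) x - X n x) \<bullet> b) \<partial>M) = 0"
proof -
  interpret S: sigma_finite_subalgebra M "F n" by (rule sfs)
  have i1: "integrable M (\<lambda>x. X (Suc n) x \<bullet> b)" "integrable M (\<lambda>x. X n x \<bullet> b)" using intX by auto
  have eqf: "(\<lambda>x. (X (Suc n) x - X n x) \<bullet> b) = (\<lambda>x. X (Suc n) x \<bullet> b - X n x \<bullet> b)"
    by (simp add: inner_diff_left)
  have m1: "AE x in M. real_cond_exp M (F n) (\<lambda>x. X (Suc n) x \<bullet> b) x = X n x \<bullet> b"
    using mart b unfolding martingale_def by auto
  have m2: "AE x in M. real_cond_exp M (F n) (\<lambda>x. X n x \<bullet> b) x = X n x \<bullet> b"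
    by (rule S.real_cond_exp_F_meas) (use i1 adapted in auto)
  have m3: "AE x in M. real_cond_exp M (F n) (\<lambda>x. X (Suc n) x \<bullet> b - X n x \<bullet> b) x
      = real_cond_exp M (F n) (\<lambda>x. X (Suc n) x \<bullet> b) x - real_cond_exp M (F n) (\<lambda>x. X n x \<bullet> b) x"
    by (rule S.real_cond_exp_diff) (use i1 in auto)
  have ae0: "AE x in M. real_cond_exp M (F n) (\<lambda>x. (X (Suc n) x - X n x) \<bullet> b) x = 0"
    using m1 m2 m3 unfolding eqf by eventually_elim auto
  have YM[measurable]: "Y \<in> borel_measurable M" by (rule measFM[OF Y])
  have "(\<integral>x. Y x * ((X (Suc n) x - X n x) \<bullet> b) \<partial>M)
      = (\<integral>x. Y x * real_cond_exp M (F n) (\<lambda>x. (X (Suc n) x - X n x) \<bullet> b) x \<partial>M)"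
    by (rule S.real_cond_exp_intg(2)[symmetric]) (use int in auto)
  also have "\<dots> = (\<integral>x. 0 \<partial>M)"
    by (rule integral_cong_AE) (use ae0 in \<open>auto elim!: eventually_mono\<close>)
  finally show ?thesis by simp
qed

end

context mart_setup begin

lemma step:
  fixes Z :: "'w \<Rightarrow> 'a" and E :: "'w set"
  assumes E: "E \<in> sets (F n)" and Z: "Z \<in> borel_measurable (F n)"
    and intZ: "integrable M (\<lambda>x. indicator E x * norm (Z x) powr p)"
  shows "integrable M (\<lambda>x. indicator E x * norm (Z x + (X (Suc n) x - X n x)) powr p)"
    and "(\<integral>x. indicator E x * norm (Z x + (X (Suc n) x - X n x)) powr p \<partial>M)
        \<le> (\<integral>x. indicator E x * norm (Z x) powr p \<partial>M)
           + KT p * (1+nu) * (\<integral>x. indicator E x * norm (Z x) powr (p-2) \<partial>M) + KT p * nu * measure M E"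
    and "integrable M (\<lambda>x. indicator E x * norm (Z x) powr (p-2))"
proof -
  define h where "h x = X (Suc n) x - X n x" for x
  define G where "G x = (indicator E x :: real)" for x
  define D where "D x = norm (h x) powr p" for x
  have EM: "E \<in> sets M" using sets_FM[OF E] .
  have ZM[measurable]: "Z \<in> borel_measurable M" by (rule measFM[OF Z])
  have hM[measurable]: "h \<in> borel_measurable M" unfolding h_def by measurable
  have GF: "G \<in> borel_measurable (F n)" unfolding G_def using E by measurable
  have GM[measurable]: "G \<in> borel_measurable M" unfolding G_def using EM by measurable
  have G01: "G x = 0 \<or> G x = 1" "G x \<ge> 0" for x unfolding G_def by (auto simp: indicator_def)
  have iG: "integrable M G" unfolding G_def using EM by (intro integrable_real_indicator) (auto simp: less_top[symmetric])
  have intG: "(\<integral>x. G x \<partial>M) = measure M E" unfolding G_def using EM by simp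
  have D0: "D x \<ge> 0" for x unfolding D_def by simp
  have iD: "integrable M (\<lambda>x. G x * D x)" and iDle: "(\<integral>x. G x * D x \<partial>M) \<le> nu * measure M E"
    using incr_real[OF GF G01(2) iG] unfolding D_def h_def intG by auto
  have iZp: "integrable M (\<lambda>x. G x * norm (Z x) powr p)" using intZ unfolding G_def .
  define W where "W x = G x * norm (Z x) powr (p-2)" for x
  have WF: "W \<in> borel_measurable (F n)" unfolding W_def using GF Z by measurable
  have WM[measurable]: "W \<in> borel_measurable M" by (rule measFM[OF WF])
  have W0: "W x \<ge> 0" for x unfolding W_def using G01 by auto
  have iW: "integrable M W"
  proof (rule Bochner_Integration.integrable_bound[where f="\<lambda>x. G x + G x * norm (Z x) powr p"])
    show "integrable M (\<lambda>x. G x + G x * norm (Z x) powr p)" using iG iZp by auto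
    show "AE x in M. norm (W x) \<le> norm (G x + G x * norm (Z x) powr p)"
    proof (intro AE_I2)
      fix x
      have "norm (Z x) powr (p-2) * 1 powr (p-(p-2)) \<le> norm (Z x) powr p + 1 powr p"
        by (rule mix_bound) (use p2 in auto)
      then have "norm (Z x) powr (p-2) \<le> 1 + norm (Z x) powr p" by simp
      then show "norm (W x) \<le> norm (G x + G x * norm (Z x) powr p)" unfolding W_def using G01[of x] by auto
    qed
  qed measurable
  have iWD: "integrable M (\<lambda>x. W x * D x)" and iWDle: "(\<integral>x. W x * D x \<partial>M) \<le> nu * (\<integral>x. W x \<partial>M)"
    using incr_real[OF WF W0 iW] unfolding D_def h_def by auto
  have h2le: "W x * (norm (h x))^2 \<le> W x + W x * D x" for x
  proof -
    have "(norm (h x))^2 \<le> 1 + D x" unfolding D_def by (rule sq_le_one_plus) (use p2 in auto)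
    then have "W x * (norm (h x))^2 \<le> W x * (1 + D x)" by (rule mult_left_mono) (rule W0)
    then show ?thesis by (simp add: distrib_left)
  qed
  have iWh2: "integrable M (\<lambda>x. W x * (norm (h x))^2)"
  proof (rule Bochner_Integration.integrable_bound[where f="\<lambda>x. W x + W x * D x"])
    show "integrable M (\<lambda>x. W x + W x * D x)" using iW iWD by auto
    show "AE x in M. norm (W x * (norm (h x))^2) \<le> norm (W x + W x * D x)"
      using h2le W0 D0 by (intro AE_I2) (simp add: abs_of_nonneg)
  qed measurable
  have iWh2le: "(\<integral>x. W x * (norm (h x))^2 \<partial>M) \<le> (1+nu) * (\<integral>x. W x \<partial>M)"
  proof -
    have "(\<integral>x. W x * (norm (h x))^2 \<partial>M) \<le> (\<integral>x. W x + W x * D x \<partial>M)"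
      by (rule integral_mono) (use iWh2 iW iWD h2le in auto)
    also have "\<dots> = (\<integral>x. W x \<partial>M) + (\<integral>x. W x * D x \<partial>M)" by (rule Bochner_Integration.integral_add) (use iW iWD in auto)
    finally show ?thesis using iWDle by (simp add: algebra_simps)
  qed
  have mixb: "W x * (norm (Z x) * norm (h x)) \<le> G x * norm (Z x) powr p + G x * D x" for x
  proof -
    have "W x * (norm (Z x) * norm (h x)) = G x * (norm (Z x) powr (p-1) * norm (h x) powr (p - (p-1)))"
      unfolding W_def using powr_split1[of "norm (Z x)" "p-1"] by (simp add: mult.assoc)
    also have "\<dots> \<le> G x * (norm (Z x) powr p + norm (h x) powr p)"
      by (rule mult_left_mono[OF mix_bound]) (use p2 G01 in auto)
    finally show ?thesis unfolding D_def by (simp add: distrib_left)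
  qed
  have ibnd: "integrable M (\<lambda>x. G x * norm (Z x) powr p + G x * D x)" using iZp iD by auto
  have icross: "integrable M (\<lambda>x. W x * (Z x \<bullet> h x))"
  proof (rule Bochner_Integration.integrable_bound[OF ibnd])
    show "AE x in M. norm (W x * (Z x \<bullet> h x)) \<le> norm (G x * norm (Z x) powr p + G x * D x)"
    proof (intro AE_I2)
      fix x
      have "norm (W x * (Z x \<bullet> h x)) = W x * \<bar>Z x \<bullet> h x\<bar>" using W0[of x] by (simp add: abs_mult)
      also have "\<dots> \<le> W x * (norm (Z x) * norm (h x))" by (rule mult_left_mono[OF Cauchy_Schwarz_ineq2 W0])
      also have "\<dots> \<le> G x * norm (Z x) powr p + G x * D x" by (rule mixb)
      also have "\<dots> \<le> norm (G x * norm (Z x) powr p + G x * D x)" by simp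
      finally show "norm (W x * (Z x \<bullet> h x)) \<le> norm (G x * norm (Z x) powr p + G x * D x)" .
    qed
  qed measurable
  have ib: "integrable M (\<lambda>x. (W x * (Z x \<bullet> b)) * (h x \<bullet> b))" if b: "b \<in> Basis" for b
  proof (rule Bochner_Integration.integrable_bound[OF ibnd])
    show "AE x in M. norm ((W x * (Z x \<bullet> b)) * (h x \<bullet> b)) \<le> norm (G x * norm (Z x) powr p + G x * D x)"
    proof (intro AE_I2)
      fix x
      have "norm ((W x * (Z x \<bullet> b)) * (h x \<bullet> b)) = W x * (\<bar>Z x \<bullet> b\<bar> * \<bar>h x \<bullet> b\<bar>)" using W0[of x] by (simp add: abs_mult)
      also have "\<dots> \<le> W x * (norm (Z x) * norm (h x))"
        by (rule mult_left_mono[OF mult_mono W0]) (use Basis_le_norm[OF b] in auto)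
      also have "\<dots> \<le> G x * norm (Z x) powr p + G x * D x" by (rule mixb)
      also have "\<dots> \<le> norm (G x * norm (Z x) powr p + G x * D x)" by simp
      finally show "norm ((W x * (Z x \<bullet> b)) * (h x \<bullet> b)) \<le> norm (G x * norm (Z x) powr p + G x * D x)" .
    qed
  qed measurable
  have cross0: "(\<integral>x. W x * (Z x \<bullet> h x) \<partial>M) = 0"
  proof -
    have eq: "(\<lambda>x. W x * (Z x \<bullet> h x)) = (\<lambda>x. \<Sum>b\<in>Basis. (W x * (Z x \<bullet> b)) * (h x \<bullet> b))"
      by (rule ext) (simp add: euclidean_inner[of "Z _" "h _"] sum_distrib_left mult.assoc)
    have "(\<integral>x. W x * (Z x \<bullet> h x) \<partial>M) = (\<Sum>b\<in>Basis. \<integral>x. (W x * (Z x \<bullet> b)) * (h x \<bullet> b) \<partial>M)"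
      unfolding eq by (rule Bochner_Integration.integral_sum) (rule ib)
    also have "\<dots> = 0"
    proof (rule sum.neutral, rule ballI)
      fix b :: 'a assume b: "b \<in> Basis"
      have YF: "(\<lambda>x. W x * (Z x \<bullet> b)) \<in> borel_measurable (F n)" using WF Z by measurable
      show "(\<integral>x. (W x * (Z x \<bullet> b)) * (h x \<bullet> b) \<partial>M) = 0"
        using cross_zero[OF YF b] ib[OF b] unfolding h_def by simp
    qed
    finally show ?thesis .
  qed
  define R where "R x = G x * norm (Z x) powr p + p * (W x * (Z x \<bullet> h x)) + KT p * (W x * (norm (h x))^2 + G x * D x)" for x
  have ptw: "G x * norm (Z x + h x) powr p \<le> R x" for x
  proof (cases "G x = 0")
    case True
    then show ?thesis unfolding R_def W_def by simp
  next
    case False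
    then have "G x = 1" using G01 by auto
    then show ?thesis unfolding R_def W_def D_def using vec_taylor_bound[OF p2, of "Z x" "h x"]
      by (simp add: mult.assoc)
  qed
  have iR: "integrable M R" unfolding R_def using iZp icross iWh2 iD by auto
  have i1: "integrable M (\<lambda>x. G x * norm (Z x + h x) powr p)"
  proof (rule Bochner_Integration.integrable_bound[OF iR])
    show "AE x in M. norm (G x * norm (Z x + h x) powr p) \<le> norm (R x)"
      using ptw G01 by (intro AE_I2) (smt (verit) norm_ge_zero powr_ge_zero real_norm_def mult_nonneg_nonneg)
  qed measurable
  then show "integrable M (\<lambda>x. indicator E x * norm (Z x + (X (Suc n) x - X n x)) powr p)"
    unfolding G_def h_def .
  have "(\<integral>x. G x * norm (Z x + h x) powr p \<partial>M) \<le> (\<integral>x. R x \<partial>M)"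
    by (rule integral_mono) (use i1 iR ptw in auto)
  also have "(\<integral>x. R x \<partial>M) = (\<integral>x. G x * norm (Z x) powr p \<partial>M) + p * (\<integral>x. W x * (Z x \<bullet> h x) \<partial>M)
       + KT p * ((\<integral>x. W x * (norm (h x))^2 \<partial>M) + (\<integral>x. G x * D x \<partial>M))"
    unfolding R_def using iZp icross iWh2 iD by simp
  also have "\<dots> \<le> (\<integral>x. G x * norm (Z x) powr p \<partial>M) + KT p * ((1+nu) * (\<integral>x. W x \<partial>M) + nu * measure M E)"
    unfolding cross0 using iWh2le iDle KT_pos[OF p2]
    by (simp add: mult_left_mono add_mono)
  finally show "(\<integral>x. indicator E x * norm (Z x + (X (Suc n) x - X n x)) powr p \<partial>M)
        \<le> (\<integral>x. indicator E x * norm (Z x) powr p \<partial>M)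
           + KT p * (1+nu) * (\<integral>x. indicator E x * norm (Z x) powr (p-2) \<partial>M) + KT p * nu * measure M E"
    unfolding G_def h_def W_def by (simp add: algebra_simps)
  show "integrable M (\<lambda>x. indicator E x * norm (Z x) powr (p-2))" using iW unfolding W_def G_def .
qed

end

lemma recur_arith:
  fixes g A B mu x b b' :: real
  assumes g: "g > 1" and A: "A > 0" and B: "B \<ge> 0" and mu: "mu \<ge> 0" and x: "x \<ge> 1"
    and b0: "b \<ge> 0" and bC: "b \<le> (2*(A*(2*A/g) powr (g-1) + B)/g) * x powr g * mu"
    and b': "b' \<le> b + A * (b / ((2*A/g) * x) + ((2*A/g) * x) powr (g-1) * mu) + B * mu"
  shows "b' \<le> (2*(A*(2*A/g) powr (g-1) + B)/g) * (x+1) powr g * mu"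
proof -
  define l where "l = 2*A/g"
  define C where "C = 2*(A*l powr (g-1) + B)/g"
  have l0: "l > 0" unfolding l_def using A g by auto
  have C0: "C \<ge> 0" unfolding C_def using A B g l0 by auto
  have xg: "x powr g = x powr (g-1) * x" using powr_split1[of x g] x by simp
  have xg1: "x powr (g-1) \<ge> 1" using x g by (simp add: ge_one_powr_ge_zero)
  have t1: "A * (b / (l * x)) \<le> (g/2) * C * x powr (g-1) * mu"
  proof -
    have "A * (b / (l * x)) = (A / l) * b / x" by (simp add: field_simps)
    also have "A / l = g/2" unfolding l_def using A g by (simp add: field_simps)
    also have "g/2 * b / x \<le> g/2 * (C * x powr g * mu) / x"
      using bC g x unfolding C_def l_def by (intro divide_right_mono mult_left_mono) auto
    also have "\<dots> = (g/2) * C * x powr (g-1) * mu" unfolding xg using x by (simp add: field_simps)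
    finally show ?thesis .
  qed
  have t2: "A * ((l * x) powr (g-1) * mu) + B * mu \<le> (A * l powr (g-1) + B) * x powr (g-1) * mu"
  proof -
    have "(l * x) powr (g-1) = l powr (g-1) * x powr (g-1)" using l0 x by (simp add: powr_mult)
    moreover have "B * mu \<le> B * mu * x powr (g-1)" using B mu xg1
      by (metis mult_left_mono mult.right_neutral mult_nonneg_nonneg)
    ultimately show ?thesis by (simp add: algebra_simps)
  qed
  have t3: "(A * l powr (g-1) + B) = (g/2) * C" unfolding C_def using g by simp
  have s1: "b' \<le> b + A * (b / (l * x)) + (A * ((l * x) powr (g-1) * mu) + B * mu)"
    using b' unfolding l_def by (simp add: distrib_left add.assoc)
  have bC': "b \<le> C * x powr g * mu" using bC unfolding C_def l_def .
  have e3: "(A * l powr (g-1) + B) * x powr (g-1) * mu = (g/2) * C * x powr (g-1) * mu" using t3 by simp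
  have "b' \<le> C * x powr g * mu + (g/2) * C * x powr (g-1) * mu + (g/2) * C * x powr (g-1) * mu"
    using s1 bC' t1 t2 e3 by linarith
  also have "\<dots> = C * mu * (x powr g + g * x powr (g-1))" by (simp add: algebra_simps)
  also have "\<dots> \<le> C * mu * (x+1) powr g"
    by (rule mult_left_mono[OF bern_powr]) (use x g C0 mu in auto)
  finally show ?thesis unfolding C_def l_def by (simp add: algebra_simps)
qed

context mart_setup begin

definition "gam = p/2"
definition "AA = KT p * (1+nu)"
definition "CG = 2*(AA*(2*AA/gam) powr (gam-1) + KT p * nu)/gam"

lemma CG_nonneg: "CG \<ge> 0"
  unfolding CG_def AA_def gam_def using KT_pos[OF p2] nu_ge p2 by (auto intro!: divide_nonneg_pos)

lemma growth:
  assumes E: "E \<in> sets (F k)"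
  shows "integrable M (\<lambda>x. indicator E x * norm (X (k+m) x - X k x) powr p)
     \<and> (\<integral>x. indicator E x * norm (X (k+m) x - X k x) powr p \<partial>M) \<le> CG * (real m + 1) powr (p/2) * measure M E"
proof (induction m)
  case 0
  then show ?case using CG_nonneg by simp
next
  case (Suc m)
  have En: "E \<in> sets (F (k+m))" using sets_mono[of k "k+m"] E by auto
  have Z: "(\<lambda>x. X (k+m) x - X k x) \<in> borel_measurable (F (k+m))"
    using measF[of "k+m" "k+m"] measF[of k "k+m"] by measurable
  note st = step[OF En Z conjunct1[OF Suc.IH]]
  have eqZ: "X (k+m) x - X k x + (X (Suc (k+m)) x - X (k+m) x) = X (k + Suc m) x - X k x" for x by simp
  define b where "b = (\<integral>x. indicator E x * norm (X (k+m) x - X k x) powr p \<partial>M)"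
  define b' where "b' = (\<integral>x. indicator E x * norm (X (k + Suc m) x - X k x) powr p \<partial>M)"
  define I2 where "I2 = (\<integral>x. indicator E x * norm (X (k+m) x - X k x) powr (p-2) \<partial>M)"
  define mu where "mu = measure M E"
  define s where "s = (2*AA/gam) * (real m + 1)"
  have AA0: "AA > 0" unfolding AA_def using KT_pos[OF p2] nu_ge by (simp add: add_pos_nonneg)
  have s0: "s > 0" unfolding s_def gam_def using AA0 p2 by auto
  have EM: "E \<in> sets M" using sets_FM[OF E] .
  have b0: "b \<ge> 0" unfolding b_def by (rule integral_nonneg_AE) (auto simp: indicator_def)
  have st2: "b' \<le> b + AA * I2 + KT p * nu * mu"
    using st(2) unfolding b_def b'_def I2_def mu_def AA_def eqZ by simp
  have I2le: "I2 \<le> b / s + s powr (gam - 1) * mu"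
  proof -
    have "I2 \<le> (\<integral>x. indicator E x * norm (X (k+m) x - X k x) powr p / s + s powr ((p-2)/2) * indicator E x \<partial>M)"
      unfolding I2_def
    proof (rule integral_mono)
      show "integrable M (\<lambda>x. indicator E x * norm (X (k+m) x - X k x) powr (p-2))" by (rule st(3))
      show "integrable M (\<lambda>x. indicator E x * norm (X (k+m) x - X k x) powr p / s + s powr ((p-2)/2) * indicator E x)"
        using conjunct1[OF Suc.IH] EM by (intro Bochner_Integration.integrable_add integrable_divide integrable_mult_right integrable_real_indicator) (auto simp: less_top[symmetric])
      fix x
      show "indicator E x * norm (X (k+m) x - X k x) powr (p-2) \<le> indicator E x * norm (X (k+m) x - X k x) powr p / s + s powr ((p-2)/2) * indicator E x"
        using young_split[of "norm (X (k+m) x - X k x)" s p] s0 p2 by (auto simp: indicator_def)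
    qed
    also have "\<dots> = b / s + s powr (gam - 1) * mu"
      unfolding b_def mu_def gam_def using conjunct1[OF Suc.IH] EM
      by (simp add: Bochner_Integration.integral_add integrable_real_indicator less_top[symmetric] diff_divide_distrib)
    finally show ?thesis .
  qed
  have b'2: "b' \<le> b + AA * (b / ((2*AA/gam) * (real m + 1)) + ((2*AA/gam) * (real m + 1)) powr (gam-1) * mu) + KT p * nu * mu"
    using st2 I2le AA0 unfolding s_def by (smt (verit) mult_left_mono)
  have "b' \<le> CG * ((real m + 1) + 1) powr gam * mu"
    unfolding CG_def
  proof (rule recur_arith[OF _ AA0 _ _ _ b0 _ b'2])
    show "1 < gam" unfolding gam_def using p2 by simp
    show "0 \<le> KT p * nu" using KT_pos[OF p2] nu_ge by simp
    show "0 \<le> mu" unfolding mu_def by simp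
    show "1 \<le> real m + 1" by simp
    show "b \<le> 2 * (AA * (2 * AA / gam) powr (gam - 1) + KT p * nu) / gam * (real m + 1) powr gam * mu"
      using conjunct2[OF Suc.IH] unfolding b_def mu_def CG_def gam_def by simp
  qed
  then have "b' \<le> CG * (real (Suc m) + 1) powr (p/2) * measure M E"
    unfolding mu_def gam_def by (simp add: add.commute)
  moreover have "integrable M (\<lambda>x. indicator E x * norm (X (k + Suc m) x - X k x) powr p)"
    using st(1) unfolding eqZ by simp
  ultimately show ?case unfolding b'_def by simp
qed

end

lemma first_time_gt:
  assumes "first_time P > enat n" "m \<le> n"
  shows "\<not> P m"
proof
  assume Pm: "P m"
  then have "first_time P = enat (LEAST j. P j)" unfolding first_time_def by auto
  moreover have "(LEAST j. P j) \<le> m" using Pm by (rule Least_le)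
  ultimately show False using assms by auto
qed

lemma first_time_lt:
  assumes "first_time P > first_time Q"
  shows "\<exists>j. Q j \<and> (\<forall>i\<le>j. \<not> P i)"
proof -
  have "\<exists>j. Q j"
  proof (rule ccontr)
    assume "\<not> (\<exists>j. Q j)"
    then have "first_time Q = \<infinity>" unfolding first_time_def by auto
    then show False using assms by auto
  qed
  then have fq: "first_time Q = enat (LEAST j. Q j)" unfolding first_time_def by auto
  define j where "j = (LEAST j. Q j)"
  have Qj: "Q j" unfolding j_def using \<open>\<exists>j. Q j\<close> by (rule LeastI_ex)
  have "\<forall>i\<le>j. \<not> P i" using first_time_gt[where P=P and n=j] assms fq unfolding j_def by auto
  then show ?thesis using Qj by blast
qed

lemma pow_sum_bound:
  fixes u v w A r p :: real
  assumes "0 \<le> A" "A \<le> u" "0 < A" "w \<ge> 0" "N \<ge> 0" "N < A + u + w" "0 < r" "r < p"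
  shows "N powr r \<le> 3 powr r * (u powr r + A powr (r-p) * w powr p)"
proof (cases "w \<le> u")
  case True
  then have "N \<le> 3*u" using assms by linarith
  then have "N powr r \<le> (3*u) powr r" using assms by (intro powr_mono2) auto
  also have "\<dots> = 3 powr r * u powr r" using assms by (simp add: powr_mult)
  also have "\<dots> \<le> 3 powr r * (u powr r + A powr (r-p) * w powr p)" by (simp add: mult_left_mono)
  finally show ?thesis .
next
  case False
  then have "N \<le> 3*w" "A \<le> w" using assms by linarith+
  then have "N powr r \<le> (3*w) powr r" using assms by (intro powr_mono2) auto
  also have "\<dots> = 3 powr r * w powr r" using assms by (simp add: powr_mult)
  also have "w powr r = w powr p * w powr (r-p)" by (simp add: powr_add[symmetric])
  also have "w powr (r-p) \<le> A powr (r-p)" using assms \<open>A \<le> w\<close> by (intro powr_mono2') auto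
  then have "w powr p * w powr (r-p) \<le> A powr (r-p) * w powr p" by (simp add: mult.commute mult_left_mono)
  then have "3 powr r * (w powr p * w powr (r-p)) \<le> 3 powr r * (u powr r + A powr (r-p) * w powr p)"
    by (rule mult_left_mono[OF order_trans]) auto
  finally show ?thesis .
qed


lemma powr_add_le:
  fixes u v p :: real
  assumes "u \<ge> 0" "v \<ge> 0" "p > 0"
  shows "(u+v) powr p \<le> 2 powr p * (u powr p + v powr p)"
proof -
  have "(u+v) powr p \<le> (2 * max u v) powr p" using assms by (intro powr_mono2) auto
  also have "\<dots> = 2 powr p * max u v powr p" using assms by (simp add: powr_mult)
  also have "max u v powr p \<le> u powr p + v powr p" by (cases "u \<le> v") (auto simp: max_def)
  then have "2 powr p * max u v powr p \<le> 2 powr p * (u powr p + v powr p)" by simp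
  finally show ?thesis .
qed


context mart_setup begin

definition Bset :: "nat \<Rightarrow> 'w set" where
  "Bset j = {x \<in> space M. \<forall>i\<in>{1..j}. real i \<le> norm (X i x)}"

definition Eset :: "nat \<Rightarrow> real \<Rightarrow> 'w set" where
  "Eset j a = Bset j \<inter> {x \<in> space M. a \<le> norm (X (Suc j) x - X j x)}"

lemma Bset_sets: "Bset j \<in> sets (F j)"
proof -
  have "Measurable.pred (F j) (\<lambda>x. \<forall>i\<in>{1..j}. real i \<le> norm (X i x))"
  proof (rule pred_intros_finite(3))
    fix i assume "i \<in> {1..j}"
    then have [measurable]: "X i \<in> borel_measurable (F j)" using measF by auto
    show "Measurable.pred (F j) (\<lambda>x. real i \<le> norm (X i x))" by measurable
  qed simp
  then have "{x \<in> space (F j). \<forall>i\<in>{1..j}. real i \<le> norm (X i x)} \<in> sets (F j)" by (rule predE)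
  then show ?thesis unfolding Bset_def space_F .
qed

lemma Eset_sets: "Eset j a \<in> sets (F (Suc j))"
proof -
  have B: "Bset j \<in> sets (F (Suc j))" using Bset_sets[of j] sets_mono[of j "Suc j"] by auto
  have [measurable]: "X j \<in> borel_measurable (F (Suc j))" "X (Suc j) \<in> borel_measurable (F (Suc j))"
    using measF by auto
  have "{x \<in> space (F (Suc j)). a \<le> norm (X (Suc j) x - X j x)} \<in> sets (F (Suc j))" by measurable
  then show ?thesis unfolding Eset_def space_F using B by auto
qed

lemma Bset_M[measurable]: "Bset j \<in> sets M" using sets_FM[OF Bset_sets] .
lemma Eset_M[measurable]: "Eset j a \<in> sets M" using sets_FM[OF Eset_sets] .

definition "c0 = (\<integral>x. norm (X 0 x) powr p \<partial>M)"
definition "Kb = 2 powr p * (CG * 2 powr (p/2) + c0)"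

lemma PB_bound:
  assumes mom0: "(\<integral>\<^sup>+ x. ennreal (norm (X 0 x) powr p) \<partial>M) < \<infinity>" and j: "j \<ge> 1"
  shows "measure M (Bset j) \<le> Kb * real j powr (-p/2)"
proof -
  have i0: "integrable M (\<lambda>x. norm (X 0 x) powr p)"
    by (rule integrableI_nonneg) (use mom0 in auto)
  have c00: "c0 \<ge> 0" unfolding c0_def by (rule integral_nonneg_AE) auto
  have SM: "space M \<in> sets (F 0)" using sets.top[of "F 0"] space_F[of 0] by simp
  note gr = growth[OF SM, where m=j]
  have ig: "integrable M (\<lambda>x. indicator (space M) x * norm (X j x - X 0 x) powr p)" using conjunct1[OF gr] by simp
  have igl: "(\<integral>x. indicator (space M) x * norm (X j x - X 0 x) powr p \<partial>M) \<le> CG * (real j + 1) powr (p/2)"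
    using conjunct2[OF gr] by (simp add: prob_space)
  have ptw: "real j powr p * indicator (Bset j) x \<le> 2 powr p * (indicator (space M) x * norm (X j x - X 0 x) powr p + norm (X 0 x) powr p)"
    if x: "x \<in> space M" for x
  proof (cases "x \<in> Bset j")
    case True
    then have "real j \<le> norm (X j x)" unfolding Bset_def using j by auto
    then have r1: "real j powr p \<le> norm (X j x) powr p" using p2 by (intro powr_mono2) auto
    have "norm (X j x) \<le> norm (X j x - X 0 x) + norm (X 0 x)" using norm_triangle_ineq[of "X j x - X 0 x" "X 0 x"] by simp
    then have "norm (X j x) powr p \<le> (norm (X j x - X 0 x) + norm (X 0 x)) powr p" using p2 by (intro powr_mono2) auto
    with r1 have "real j powr p \<le> (norm (X j x - X 0 x) + norm (X 0 x)) powr p" by linarith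
    also have "\<dots> \<le> 2 powr p * (norm (X j x - X 0 x) powr p + norm (X 0 x) powr p)" by (rule powr_add_le) (use p2 in auto)
    finally show ?thesis using True x by simp
  next
    case False
    then show ?thesis by simp
  qed
  have "real j powr p * measure M (Bset j) = (\<integral>x. real j powr p * indicator (Bset j) x \<partial>M)" by simp
  also have "\<dots> \<le> (\<integral>x. 2 powr p * (indicator (space M) x * norm (X j x - X 0 x) powr p + norm (X 0 x) powr p) \<partial>M)"
    by (rule integral_mono) (use ig i0 ptw in \<open>auto simp: less_top[symmetric]\<close>)
  also have "\<dots> = 2 powr p * ((\<integral>x. indicator (space M) x * norm (X j x - X 0 x) powr p \<partial>M) + c0)"
    unfolding c0_def using ig i0 by simp
  also have "\<dots> \<le> 2 powr p * (CG * (real j + 1) powr (p/2) + c0)" using igl by simp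
  also have "\<dots> \<le> Kb * real j powr (p/2)"
  proof -
    have "(real j + 1) powr (p/2) \<le> (2 * real j) powr (p/2)" using j p2 by (intro powr_mono2) auto
    also have "\<dots> = 2 powr (p/2) * real j powr (p/2)" by (simp add: powr_mult)
    finally have a1: "CG * (real j + 1) powr (p/2) \<le> CG * 2 powr (p/2) * real j powr (p/2)"
      using CG_nonneg by (simp add: mult_left_mono mult.assoc)
    have "1 \<le> real j powr (p/2)" using j p2 by (simp add: ge_one_powr_ge_zero)
    then have a2: "c0 \<le> c0 * real j powr (p/2)" using c00 by (simp add: mult_le_cancel_left1)
    have "CG * (real j + 1) powr (p/2) + c0 \<le> (CG * 2 powr (p/2) + c0) * real j powr (p/2)"
      using a1 a2 by (simp add: distrib_right)
    then show ?thesis unfolding Kb_def by (simp add: mult.assoc)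
  qed
  finally have le: "real j powr p * measure M (Bset j) \<le> Kb * real j powr (p/2)" .
  have jp: "real j powr p = real j powr (p/2) * real j powr (p/2)" by (simp add: powr_add[symmetric])
  have jp0: "real j powr (p/2) > 0" using j by simp
  have "real j powr (p/2) * (real j powr (p/2) * measure M (Bset j)) \<le> real j powr (p/2) * Kb"
    using le unfolding jp by (simp only: mult.assoc mult.commute[of Kb])
  then have "real j powr (p/2) * measure M (Bset j) \<le> Kb" using jp0 by (simp only: mult_le_cancel_left_pos)
  then have m1: "measure M (Bset j) \<le> Kb / real j powr (p/2)"
    using pos_le_divide_eq[OF jp0, of "measure M (Bset j)" Kb] by (simp add: mult.commute)
  have e: "-p/2 = -(p/2)" by simp
  have "real j powr (-p/2) = 1 / real j powr (p/2)" unfolding e by (rule powr_minus_divide)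
  then show ?thesis using m1 by simp
qed

definition "SB = 1 + Kb * (\<Sum>j. real j powr (-p/2))"

lemma sumB_bound:
  assumes mom0: "(\<integral>\<^sup>+ x. ennreal (norm (X 0 x) powr p) \<partial>M) < \<infinity>"
  shows "(\<Sum>j<n. measure M (Bset j)) \<le> SB"
proof -
  have summ: "summable (\<lambda>j. real j powr (-p/2))" using p2 by (subst summable_real_powr_iff) auto
  have Kb0: "Kb \<ge> 0"
  proof -
    have "c0 \<ge> 0" unfolding c0_def by (rule integral_nonneg_AE) auto
    then show ?thesis unfolding Kb_def using CG_nonneg by auto
  qed
  have t: "measure M (Bset j) \<le> (if j = 0 then 1 else 0) + Kb * real j powr (-p/2)" for j
  proof (cases "j = 0")
    case True then show ?thesis by simp
  next
    case False then show ?thesis using PB_bound[OF mom0, of j] by simp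
  qed
  have "(\<Sum>j<n. measure M (Bset j)) \<le> (\<Sum>j<n. (if j = 0 then 1 else 0) + Kb * real j powr (-p/2))"
    by (rule sum_mono) (rule t)
  also have "\<dots> = (\<Sum>j<n. (if j = 0 then 1 else 0 :: real)) + Kb * (\<Sum>j<n. real j powr (-p/2))"
    by (simp add: sum.distrib sum_distrib_left)
  also have "(\<Sum>j<n. (if j = 0 then 1 else 0 :: real)) \<le> 1"
    by (cases "n = 0") (auto simp: sum.delta)
  also have "(\<Sum>j<n. real j powr (-p/2)) \<le> (\<Sum>j. real j powr (-p/2))"
    by (rule sum_le_suminf[OF summ]) auto
  finally show ?thesis unfolding SB_def using Kb0 by (simp add: mult_left_mono)
qed

end

context mart_setup begin

lemma gj_bound:
  assumes n: "n \<ge> 1" and j: "j < n" and r: "0 < r" "r < p"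
  shows "integrable M (\<lambda>x. indicator (Eset j (real n / 3)) x * (3 powr r * (norm (X (Suc j) x - X j x) powr r
            + (real n / 3) powr (r-p) * norm (X n x - X (Suc j) x) powr p)))"
    and "(\<integral>x. indicator (Eset j (real n / 3)) x * (3 powr r * (norm (X (Suc j) x - X j x) powr r
            + (real n / 3) powr (r-p) * norm (X n x - X (Suc j) x) powr p)) \<partial>M)
         \<le> 3 powr p * nu * (1 + 3 powr p * CG) * measure M (Bset j) / real n powr (p-r)"
proof -
  define a where "a = real n / 3"
  define B where "B = Bset j"
  define E where "E = Eset j a"
  define u where "u x = norm (X (Suc j) x - X j x)" for x
  define w where "w x = norm (X n x - X (Suc j) x)" for x
  have a0: "a > 0" unfolding a_def using n by simp
  have EB: "E \<subseteq> B" unfolding E_def B_def Eset_def by auto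
  have Eu: "x \<in> E \<Longrightarrow> a \<le> u x" for x unfolding E_def Eset_def u_def by auto
  have BM[measurable]: "B \<in> sets M" and EM[measurable]: "E \<in> sets M" unfolding B_def E_def by measurable
  have uM[measurable]: "u \<in> borel_measurable M" and wM[measurable]: "w \<in> borel_measurable M"
    unfolding u_def w_def by measurable
  have BF: "(\<lambda>x. indicator B x :: real) \<in> borel_measurable (F j)" unfolding B_def using Bset_sets by measurable
  have iB: "integrable M (\<lambda>x. indicator B x :: real)" by (auto simp: less_top[symmetric])
  have iE: "integrable M (\<lambda>x. indicator E x :: real)" by (auto simp: less_top[symmetric])
  have iBu: "integrable M (\<lambda>x. indicator B x * u x powr p)"
    and iBule: "(\<integral>x. indicator B x * u x powr p \<partial>M) \<le> nu * measure M B"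
    using incr_real[OF BF _ iB] unfolding u_def by auto
  have ptw1: "indicator E x * u x powr r \<le> a powr (r-p) * (indicator B x * u x powr p)" for x
  proof (cases "x \<in> E")
    case True
    then have ua: "a \<le> u x" by (rule Eu)
    have "u x powr r = u x powr p * u x powr (r-p)" by (simp add: powr_add[symmetric])
    also have "u x powr (r-p) \<le> a powr (r-p)" using ua a0 r by (intro powr_mono2') auto
    then have "u x powr p * u x powr (r-p) \<le> u x powr p * a powr (r-p)" by (simp add: mult_left_mono)
    finally show ?thesis using True EB by (auto simp: mult.commute)
  next
    case False then show ?thesis using EB by (auto simp: indicator_def)
  qed
  have iEu: "integrable M (\<lambda>x. indicator E x * u x powr r)"
  proof (rule Bochner_Integration.integrable_bound[where f="\<lambda>x. a powr (r-p) * (indicator B x * u x powr p)"])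
    show "integrable M (\<lambda>x. a powr (r-p) * (indicator B x * u x powr p))" using iBu by auto
    show "AE x in M. norm (indicator E x * u x powr r) \<le> norm (a powr (r-p) * (indicator B x * u x powr p))"
      using ptw1 by (intro AE_I2) (auto simp: indicator_def)
  qed measurable
  have IEu: "(\<integral>x. indicator E x * u x powr r \<partial>M) \<le> a powr (r-p) * (nu * measure M B)"
  proof -
    have "(\<integral>x. indicator E x * u x powr r \<partial>M) \<le> (\<integral>x. a powr (r-p) * (indicator B x * u x powr p) \<partial>M)"
      by (rule integral_mono) (use iEu iBu ptw1 in auto)
    also have "\<dots> = a powr (r-p) * (\<integral>x. indicator B x * u x powr p \<partial>M)" by simp
    also have "\<dots> \<le> a powr (r-p) * (nu * measure M B)" using iBule by (simp add: mult_left_mono)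
    finally show ?thesis .
  qed
  have ptw2: "a powr p * indicator E x \<le> indicator B x * u x powr p" for x
  proof (cases "x \<in> E")
    case True
    then have "a powr p \<le> u x powr p" using Eu[OF True] a0 p2 by (intro powr_mono2) auto
    then show ?thesis using True EB by auto
  qed (auto simp: indicator_def)
  have muE: "a powr p * measure M E \<le> nu * measure M B"
  proof -
    have "a powr p * measure M E = (\<integral>x. a powr p * indicator E x \<partial>M)" by simp
    also have "\<dots> \<le> (\<integral>x. indicator B x * u x powr p \<partial>M)"
      by (rule integral_mono) (use iE iBu ptw2 in auto)
    finally show ?thesis using iBule by linarith
  qed
  have ESF: "E \<in> sets (F (Suc j))" unfolding E_def by (rule Eset_sets)
  note gr = growth[OF ESF, where m="n - Suc j"]
  have eqn: "Suc j + (n - Suc j) = n" using j by simp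
  have iEw: "integrable M (\<lambda>x. indicator E x * w x powr p)" using conjunct1[OF gr] unfolding eqn w_def .
  have IEw0: "(\<integral>x. indicator E x * w x powr p \<partial>M) \<le> CG * (real (n - Suc j) + 1) powr (p/2) * measure M E"
    using conjunct2[OF gr] unfolding eqn w_def .
  have IEw: "(\<integral>x. indicator E x * w x powr p \<partial>M) \<le> CG * 3 powr p * (nu * measure M B)"
  proof -
    have "(real (n - Suc j) + 1) powr (p/2) \<le> real n powr (p/2)" using j p2 by (intro powr_mono2) auto
    also have "\<dots> \<le> real n powr p" using n p2 by (intro powr_mono) auto
    also have "real n = 3 * a" unfolding a_def by simp
    also have "(3 * a) powr p = 3 powr p * a powr p" using a0 by (simp add: powr_mult)
    finally have "(real (n - Suc j) + 1) powr (p/2) * measure M E \<le> 3 powr p * (a powr p * measure M E)"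
      using mult_right_mono[OF _ measure_nonneg, of "(real (n - Suc j) + 1) powr (p/2)" "3 powr p * a powr p" M E]
      by (simp add: mult.assoc)
    also have "\<dots> \<le> 3 powr p * (nu * measure M B)" using muE by simp
    finally have "(real (n - Suc j) + 1) powr (p/2) * measure M E \<le> 3 powr p * (nu * measure M B)" .
    then have "CG * ((real (n - Suc j) + 1) powr (p/2) * measure M E) \<le> CG * (3 powr p * (nu * measure M B))"
      using CG_nonneg by (rule mult_left_mono)
    then show ?thesis using IEw0 by (simp add: mult.assoc)
  qed
  have iall: "integrable M (\<lambda>x. indicator E x * (3 powr r * (u x powr r + a powr (r-p) * w x powr p)))"
  proof -
    have "(\<lambda>x. indicator E x * (3 powr r * (u x powr r + a powr (r-p) * w x powr p)))
        = (\<lambda>x. 3 powr r * (indicator E x * u x powr r) + (3 powr r * a powr (r-p)) * (indicator E x * w x powr p))"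
      by (rule ext) (simp add: algebra_simps)
    then show ?thesis using iEu iEw by simp
  qed
  then show "integrable M (\<lambda>x. indicator (Eset j (real n / 3)) x * (3 powr r * (norm (X (Suc j) x - X j x) powr r
            + (real n / 3) powr (r-p) * norm (X n x - X (Suc j) x) powr p)))"
    unfolding E_def a_def u_def w_def .
  have "(\<integral>x. indicator E x * (3 powr r * (u x powr r + a powr (r-p) * w x powr p)) \<partial>M)
      = 3 powr r * (\<integral>x. indicator E x * u x powr r \<partial>M) + (3 powr r * a powr (r-p)) * (\<integral>x. indicator E x * w x powr p \<partial>M)"
  proof -
    have "(\<lambda>x. indicator E x * (3 powr r * (u x powr r + a powr (r-p) * w x powr p)))
        = (\<lambda>x. 3 powr r * (indicator E x * u x powr r) + (3 powr r * a powr (r-p)) * (indicator E x * w x powr p))"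
      by (rule ext) (simp add: algebra_simps)
    then show ?thesis using iEu iEw by simp
  qed
  also have "\<dots> \<le> 3 powr r * (a powr (r-p) * (nu * measure M B)) + (3 powr r * a powr (r-p)) * (CG * 3 powr p * (nu * measure M B))"
    using IEu IEw by (intro add_mono mult_left_mono) auto
  also have "\<dots> = (3 powr r * a powr (r-p)) * (nu * (1 + 3 powr p * CG) * measure M B)" by (simp add: algebra_simps)
  also have "3 powr r * a powr (r-p) = 3 powr p / real n powr (p-r)"
  proof -
    have "a powr (r-p) = real n powr (r-p) / 3 powr (r-p)" unfolding a_def using n by (simp add: powr_divide)
    moreover have "3 powr r / 3 powr (r-p) = (3::real) powr p" by (simp add: powr_diff[symmetric])
    moreover have "real n powr (r-p) = 1 / real n powr (p-r)"
    proof -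
      have "r - p = -(p-r)" by simp
      then show ?thesis by (simp only: powr_minus_divide)
    qed
    ultimately show ?thesis by (simp add: field_simps)
  qed
  finally show "(\<integral>x. indicator (Eset j (real n / 3)) x * (3 powr r * (norm (X (Suc j) x - X j x) powr r
            + (real n / 3) powr (r-p) * norm (X n x - X (Suc j) x) powr p)) \<partial>M)
         \<le> 3 powr p * nu * (1 + 3 powr p * CG) * measure M (Bset j) / real n powr (p-r)"
    unfolding E_def a_def u_def w_def B_def by (simp add: field_simps)
qed

end

context mart_setup begin

definition gfun :: "nat \<Rightarrow> real \<Rightarrow> nat \<Rightarrow> 'w \<Rightarrow> real" where
  "gfun n r j x = indicator (Eset j (real n / 3)) x * (3 powr r * (norm (X (Suc j) x - X j x) powr r
            + (real n / 3) powr (r-p) * norm (X n x - X (Suc j) x) powr p))"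

lemma gfun_nonneg: "gfun n r j x \<ge> 0" unfolding gfun_def by (auto simp: indicator_def)

lemma pointwise:
  assumes n: "n \<ge> 1" and r: "0 < r" "r < p" and x: "x \<in> space M"
  shows "norm (X n x) powr r
        * indicator {y. first_time (\<lambda>m. m > 0 \<and> norm (X m y) < real m) > enat n} x
        * indicator {y. first_time (\<lambda>j. norm (X j y) \<ge> real n / 3)
                        > first_time (\<lambda>j. norm (X (Suc j) y - X j y) \<ge> real n / 3)} x
        \<le> (\<Sum>j<n. gfun n r j x)"
proof (cases "first_time (\<lambda>m. m > 0 \<and> norm (X m x) < real m) > enat n
      \<and> first_time (\<lambda>j. norm (X j x) \<ge> real n / 3) > first_time (\<lambda>j. norm (X (Suc j) x - X j x) \<ge> real n / 3)")
  case False
  then have "norm (X n x) powr r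
        * indicator {y. first_time (\<lambda>m. m > 0 \<and> norm (X m y) < real m) > enat n} x
        * indicator {y. first_time (\<lambda>j. norm (X j y) \<ge> real n / 3)
                        > first_time (\<lambda>j. norm (X (Suc j) y - X j y) \<ge> real n / 3)} x = 0"
    by (auto simp: indicator_def)
  have s0: "0 \<le> (\<Sum>j<n. gfun n r j x)" by (rule sum_nonneg) (rule gfun_nonneg)
  show ?thesis by (subst \<open>_ = 0\<close>) (rule s0)
next
  case True
  define a where "a = real n / 3"
  have tau: "\<not> (m > 0 \<and> norm (X m x) < real m)" if "m \<le> n" for m
    using first_time_gt[where P="\<lambda>m. m > 0 \<and> norm (X m x) < real m" and n=n] True that by blast
  obtain j where Tj: "norm (X (Suc j) x - X j x) \<ge> a" and Sj: "\<forall>i\<le>j. \<not> norm (X i x) \<ge> a"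
    using first_time_lt[where P="\<lambda>j. norm (X j x) \<ge> real n / 3" and Q="\<lambda>j. norm (X (Suc j) x - X j x) \<ge> real n / 3"] True
    unfolding a_def by blast
  have Xn: "norm (X n x) \<ge> real n" using tau[of n] n by auto
  have jn: "j < n"
  proof (rule ccontr)
    assume "\<not> j < n"
    then have "n \<le> j" by simp
    then have "\<not> a \<le> norm (X n x)" using Sj by blast
    then have "norm (X n x) < a" by simp
    then show False using Xn n unfolding a_def by auto
  qed
  have "real i \<le> norm (X i x)" if "i \<in> {1..j}" for i
  proof -
    have "i \<le> n" "i > 0" using that jn by auto
    then show ?thesis using tau[of i] by auto
  qed
  then have inB: "x \<in> Bset j" unfolding Bset_def using x by auto
  have inE: "x \<in> Eset j a" unfolding Eset_def using inB x Tj by auto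
  have Xj: "norm (X j x) < a" using Sj by auto
  have tri: "norm (X n x) < a + norm (X (Suc j) x - X j x) + norm (X n x - X (Suc j) x)"
  proof -
    have e: "X j x + (X (Suc j) x - X j x) + (X n x - X (Suc j) x) = X n x" by simp
    have t1: "norm (X j x + (X (Suc j) x - X j x) + (X n x - X (Suc j) x))
        \<le> norm (X j x + (X (Suc j) x - X j x)) + norm (X n x - X (Suc j) x)" by (rule norm_triangle_ineq)
    have t2: "norm (X j x + (X (Suc j) x - X j x)) \<le> norm (X j x) + norm (X (Suc j) x - X j x)"
      by (rule norm_triangle_ineq)
    have "norm (X n x) \<le> norm (X j x) + norm (X (Suc j) x - X j x) + norm (X n x - X (Suc j) x)"
      using t1 t2 unfolding e by linarith
    then show ?thesis using Xj by linarith
  qed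
  have a0: "a > 0" unfolding a_def using n by simp
  have "norm (X n x) powr r \<le> 3 powr r * (norm (X (Suc j) x - X j x) powr r + a powr (r-p) * norm (X n x - X (Suc j) x) powr p)"
    by (rule pow_sum_bound) (use a0 Tj tri r in auto)
  also have "\<dots> = gfun n r j x" unfolding gfun_def using inE unfolding a_def by simp
  also have "\<dots> \<le> (\<Sum>j<n. gfun n r j x)" by (rule member_le_sum) (use jn gfun_nonneg in auto)
  finally show ?thesis using True by simp
qed

lemma main_bound:
  assumes mom0: "(\<integral>\<^sup>+ x. ennreal (norm (X 0 x) powr p) \<partial>M) < \<infinity>" and r: "0 < r" "r < p" and n: "n \<ge> 1"
  shows "(\<integral>\<^sup>+ x. ennreal (norm (X n x) powr r
        * indicator {y. first_time (\<lambda>m. m > 0 \<and> norm (X m y) < real m) > enat n} x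
        * indicator {y. first_time (\<lambda>j. norm (X j y) \<ge> real n / 3)
                        > first_time (\<lambda>j. norm (X (Suc j) y - X j y) \<ge> real n / 3)} x) \<partial>M)
     \<le> ennreal ((3 powr p * nu * (1 + 3 powr p * CG) * SB) / real n powr (p - r))"
proof -
  define K where "K = 3 powr p * nu * (1 + 3 powr p * CG)"
  have K0: "K \<ge> 0" unfolding K_def using nu_ge CG_nonneg by auto
  have ig: "integrable M (gfun n r j)" if "j < n" for j
    using gj_bound(1)[OF n that r] unfolding gfun_def by (simp add: fun_eq_iff)
  have igs: "integrable M (\<lambda>x. \<Sum>j<n. gfun n r j x)" using ig by auto
  have "(\<integral>\<^sup>+ x. ennreal (norm (X n x) powr r
        * indicator {y. first_time (\<lambda>m. m > 0 \<and> norm (X m y) < real m) > enat n} x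
        * indicator {y. first_time (\<lambda>j. norm (X j y) \<ge> real n / 3)
                        > first_time (\<lambda>j. norm (X (Suc j) y - X j y) \<ge> real n / 3)} x) \<partial>M)
      \<le> (\<integral>\<^sup>+ x. ennreal (\<Sum>j<n. gfun n r j x) \<partial>M)"
    by (rule nn_integral_mono) (use pointwise[OF n r] in \<open>auto intro: ennreal_leI\<close>)
  also have "\<dots> = ennreal (\<integral>x. (\<Sum>j<n. gfun n r j x) \<partial>M)"
    by (rule nn_integral_eq_integral[OF igs]) (auto intro: sum_nonneg gfun_nonneg)
  also have "(\<integral>x. (\<Sum>j<n. gfun n r j x) \<partial>M) = (\<Sum>j<n. \<integral>x. gfun n r j x \<partial>M)"
    by (rule Bochner_Integration.integral_sum) (use ig in auto)
  also have "\<dots> \<le> (\<Sum>j<n. K * measure M (Bset j) / real n powr (p-r))"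
  proof (rule sum_mono)
    fix j assume "j \<in> {..<n}"
    then show "(\<integral>x. gfun n r j x \<partial>M) \<le> K * measure M (Bset j) / real n powr (p-r)"
      using gj_bound(2)[OF n _ r, of j] unfolding gfun_def K_def by simp
  qed
  also have "\<dots> = K / real n powr (p-r) * (\<Sum>j<n. measure M (Bset j))"
    by (simp add: sum_distrib_left)
  also have "\<dots> \<le> K / real n powr (p-r) * SB"
    by (rule mult_left_mono[OF sumB_bound[OF mom0]]) (use K0 in auto)
  finally show ?thesis unfolding K_def by (simp add: ennreal_leI mult.commute mult.left_commute)
qed

end

theorem lemmaA2:
  fixes M :: "'w measure" and F :: "nat \<Rightarrow> 'w measure"
    and X :: "nat \<Rightarrow> 'w \<Rightarrow> 'a::euclidean_space"
    and p r \<nu> :: real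
  assumes "prob_space M"
    and "martingale M F X"
    and "p > 2"
    and "(\<integral>\<^sup>+ x. ennreal (norm (X 0 x) powr p) \<partial>M) < \<infinity>"
    and "\<And>n. AE x in M. nn_cond_exp M (F n) (\<lambda>y. ennreal (norm (X (Suc n) y - X n y) powr p)) x \<le> ennreal \<nu>"
    and "0 < r" and "r < p"
  shows "\<exists>\<theta>::real. \<forall>n::nat. n \<ge> 1 \<longrightarrow>
     (\<integral>\<^sup>+ x. ennreal (norm (X n x) powr r
        * indicator {y. first_time (\<lambda>m. m > 0 \<and> norm (X m y) < real m) > enat n} x
        * indicator {y. first_time (\<lambda>j. norm (X j y) \<ge> real n / 3)
                        > first_time (\<lambda>j. norm (X (Suc j) y - X j y) \<ge> real n / 3)} x) \<partial>M)
     \<le> ennreal (\<theta> / real n powr (p - r))"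
proof -
  interpret mart_setup M F X p \<nu> by (rule mart_setup.intro) (use assms in auto)
  show ?thesis
    by (rule exI[of _ "3 powr p * nu * (1 + 3 powr p * CG) * SB"]) (use main_bound[OF assms(4,6,7)] in auto)
qed

end
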